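(* Let $\Omega\subseteq\mathbb{R}^n$ be open, let $\mathcal{F}\subseteq\mathbb{H}(\Omega)$, and define $\varphi,\psi:\Omega\to\overline{\mathbb{R}}$ by $\varphi(x)=\inf\{z\in f(x):f\in\mathcal{F}\}$ and $\psi(x)=\sup\{z\in f(x):f\in\mathcal{F}\}$. Then $\inf\mathcal{F}=F(I(\varphi))$ and $\sup\mathcal{F}=F(S(\psi))$, where the infimum and supremum are taken in $\mathbb{H}(\Omega)$ with respect to $\le$.
   Context: $\overline{\mathbb{R}}=\mathbb{R}\cup\{\pm\infty\}$, $\mathbb{I}\overline{\mathbb{R}}$ is the set of closed intervals $[\underline a,\overline a]$ with $\underline a\le\overline a$ in $\overline{\mathbb{R}}$, $a\in\overline{\mathbb{R}}$ identified with $[a,a]$. $\mathbb{A}(\Omega)$ is the set of functions $\Omega\to\mathbb{I}\overline{\mathbb{R}}$. Partial order: $[\underline a,\overline a]\le[\underline b,\overline b]$ iff $\underline a\le\underline b$ and $\overline a\le\overline b$; $f\le g$ iff $f(x)\le g(x)$ for all $x$. $B_\delta(x)=\{y\in\Omega:\|x-y\|<\delta\}$. For $f\in\mathbb{A}(\Omega)$: $I(f)(x)=\sup_{\delta>0}\inf\{z\in f(y):y\in B_\delta(x)\}$, $S(f)(x)=\inf_{\delta>0}\sup\{z\in f(y):y\in B_\delta(x)\}$, $F(f)(x)=[I(f)(x),S(f)(x)]$. $f$ is H-continuous if for every $g\in\mathbb{A}(\Omega)$ with $g(x)\subseteq f(x)$ for all $x$ one has $F(g)=f$; $\mathbb{H}(\Omega)$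 is the set of H-continuous functions (it is order complete with respect to $\le$). *)

theory Defs
  imports "HOL-Analysis.Analysis"
begin

text \<open>Interval-valued functions on \<Omega>: an interval [a,b] in the extended reals is the pair (a,b)
  with a \<le> b. Functions are taken extensionally: outside \<Omega> they have the dummy value (0,0).\<close>

type_synonym 'a ifun = "'a \<Rightarrow> ereal \<times> ereal"

definition A :: "'a set \<Rightarrow> 'a ifun set" where
  "A \<Omega> = {f. (\<forall>x\<in>\<Omega>. fst (f x) \<le> snd (f x)) \<and> (\<forall>x. x \<notin> \<Omega> \<longrightarrow> f x = (0, 0))}"

definition imem :: "ereal \<Rightarrow> ereal \<times> ereal \<Rightarrow> bool" where
  "imem z a \<longleftrightarrow> fst a \<le> z \<and> z \<le> snd a"

definition isubset :: "ereal \<times> ereal \<Rightarrow> ereal \<times> ereal \<Rightarrow> bool" where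
  "isubset a b \<longleftrightarrow> fst b \<le> fst a \<and> snd a \<le> snd b"

definition pt :: "'a set \<Rightarrow> ('a \<Rightarrow> ereal) \<Rightarrow> 'a ifun" where
  "pt \<Omega> \<phi> = (\<lambda>x. if x \<in> \<Omega> then (\<phi> x, \<phi> x) else (0, 0))"

definition Bd :: "'a::metric_space set \<Rightarrow> real \<Rightarrow> 'a \<Rightarrow> 'a set" where
  "Bd \<Omega> \<delta> x = {y \<in> \<Omega>. dist x y < \<delta>}"

definition Ilow :: "'a::metric_space set \<Rightarrow> 'a ifun \<Rightarrow> 'a \<Rightarrow> ereal" where
  "Ilow \<Omega> f x = (SUP \<delta>\<in>{0<..}. Inf {z. \<exists>y\<in>Bd \<Omega> \<delta> x. imem z (f y)})"

definition Supp :: "'a::metric_space set \<Rightarrow> 'a ifun \<Rightarrow> 'a \<Rightarrow> ereal" where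
  "Supp \<Omega> f x = (INF \<delta>\<in>{0<..}. Sup {z. \<exists>y\<in>Bd \<Omega> \<delta> x. imem z (f y)})"

definition Fop :: "'a::metric_space set \<Rightarrow> 'a ifun \<Rightarrow> 'a ifun" where
  "Fop \<Omega> f = (\<lambda>x. if x \<in> \<Omega> then (Ilow \<Omega> f x, Supp \<Omega> f x) else (0, 0))"

definition Hcont :: "'a::metric_space set \<Rightarrow> 'a ifun set" where
  "Hcont \<Omega> = {f \<in> A \<Omega>. \<forall>g\<in>A \<Omega>. (\<forall>x\<in>\<Omega>. isubset (g x) (f x)) \<longrightarrow> Fop \<Omega> g = f}"

definition ile :: "'a set \<Rightarrow> 'a ifun \<Rightarrow> 'a ifun \<Rightarrow> bool" where
  "ile \<Omega> f g \<longleftrightarrow> (\<forall>x\<in>\<Omega>. fst (f x) \<le> fst (g x) \<and> snd (f x) \<le> snd (g x))"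

definition is_inf_H :: "'a::metric_space set \<Rightarrow> 'a ifun set \<Rightarrow> 'a ifun \<Rightarrow> bool" where
  "is_inf_H \<Omega> \<F> h \<longleftrightarrow> h \<in> Hcont \<Omega> \<and> (\<forall>f\<in>\<F>. ile \<Omega> h f)
     \<and> (\<forall>g\<in>Hcont \<Omega>. (\<forall>f\<in>\<F>. ile \<Omega> g f) \<longrightarrow> ile \<Omega> g h)"

definition is_sup_H :: "'a::metric_space set \<Rightarrow> 'a ifun set \<Rightarrow> 'a ifun \<Rightarrow> bool" where
  "is_sup_H \<Omega> \<F> h \<longleftrightarrow> h \<in> Hcont \<Omega> \<and> (\<forall>f\<in>\<F>. ile \<Omega> f h)
     \<and> (\<forall>g\<in>Hcont \<Omega>. (\<forall>f\<in>\<F>. ile \<Omega> f g) \<longrightarrow> ile \<Omega> h g)"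

end

theory Submission
  imports Defs
begin

definition lo :: "'a::metric_space set \<Rightarrow> ('a \<Rightarrow> ereal) \<Rightarrow> 'a \<Rightarrow> ereal" where
  "lo \<Omega> u x = (SUP \<delta>\<in>{0<..}. INF y\<in>Bd \<Omega> \<delta> x. u y)"

definition up :: "'a::metric_space set \<Rightarrow> ('a \<Rightarrow> ereal) \<Rightarrow> 'a \<Rightarrow> ereal" where
  "up \<Omega> u x = (INF \<delta>\<in>{0<..}. SUP y\<in>Bd \<Omega> \<delta> x. u y)"

lemma lo_cong: "(\<And>y. y \<in> \<Omega> \<Longrightarrow> u y = v y) \<Longrightarrow> lo \<Omega> u x = lo \<Omega> v x"
  unfolding lo_def Bd_def by (intro SUP_cong INF_cong) auto

lemma up_cong: "(\<And>y. y \<in> \<Omega> \<Longrightarrow> u y = v y) \<Longrightarrow> up \<Omega> u x = up \<Omega> v x"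
  unfolding up_def Bd_def by (intro SUP_cong INF_cong) auto

lemma lo_mono: "(\<And>y. y \<in> \<Omega> \<Longrightarrow> u y \<le> v y) \<Longrightarrow> lo \<Omega> u x \<le> lo \<Omega> v x"
  unfolding lo_def by (intro SUP_mono' INF_superset_mono[OF order_refl]) (auto simp: Bd_def)

lemma up_mono: "(\<And>y. y \<in> \<Omega> \<Longrightarrow> u y \<le> v y) \<Longrightarrow> up \<Omega> u x \<le> up \<Omega> v x"
  unfolding up_def by (intro INF_mono' SUP_subset_mono[OF order_refl]) (auto simp: Bd_def)

lemma lo_le: "x \<in> \<Omega> \<Longrightarrow> lo \<Omega> u x \<le> u x"
  unfolding lo_def by (rule SUP_least) (auto intro!: INF_lower2 simp: Bd_def)

lemma up_ge: "x \<in> \<Omega> \<Longrightarrow> u x \<le> up \<Omega> u x"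
  unfolding up_def by (rule INF_greatest) (auto intro!: SUP_upper2 simp: Bd_def)

lemma Bd_half:
  assumes "y \<in> Bd \<Omega> (\<delta>/2) x" shows "Bd \<Omega> (\<delta>/2) y \<subseteq> Bd \<Omega> \<delta> x"
proof
  fix z assume z: "z \<in> Bd \<Omega> (\<delta>/2) y"
  have "dist x z \<le> dist x y + dist y z" by (rule dist_triangle)
  then show "z \<in> Bd \<Omega> \<delta> x" using assms z unfolding Bd_def by auto
qed

lemma lo_idem: "x \<in> \<Omega> \<Longrightarrow> lo \<Omega> (lo \<Omega> u) x = lo \<Omega> u x"
proof (rule antisym)
  show "lo \<Omega> (lo \<Omega> u) x \<le> lo \<Omega> u x" by (rule lo_mono) (rule lo_le)
  show "lo \<Omega> u x \<le> lo \<Omega> (lo \<Omega> u) x" unfolding lo_def[of \<Omega> u x]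
  proof (rule SUP_least)
    fix \<delta> :: real assume "\<delta> \<in> {0<..}"
    hence d: "\<delta> > 0" by simp
    have "(INF y\<in>Bd \<Omega> \<delta> x. u y) \<le> (INF y\<in>Bd \<Omega> (\<delta>/2) x. lo \<Omega> u y)"
    proof (rule INF_greatest)
      fix y assume y: "y \<in> Bd \<Omega> (\<delta>/2) x"
      have "(INF y\<in>Bd \<Omega> \<delta> x. u y) \<le> (INF z\<in>Bd \<Omega> (\<delta>/2) y. u z)"
        by (rule INF_superset_mono[OF Bd_half[OF y]]) auto
      also have "\<dots> \<le> lo \<Omega> u y" unfolding lo_def using d by (intro SUP_upper) auto
      finally show "(INF y\<in>Bd \<Omega> \<delta> x. u y) \<le> lo \<Omega> u y" .
    qed
    also have "\<dots> \<le> lo \<Omega> (lo \<Omega> u) x" unfolding lo_def[of \<Omega> "lo \<Omega> u"] using d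
      by (intro SUP_upper) auto
    finally show "(INF y\<in>Bd \<Omega> \<delta> x. u y) \<le> lo \<Omega> (lo \<Omega> u) x" .
  qed
qed

lemma up_idem: "x \<in> \<Omega> \<Longrightarrow> up \<Omega> (up \<Omega> u) x = up \<Omega> u x"
proof (rule antisym)
  show "up \<Omega> u x \<le> up \<Omega> (up \<Omega> u) x" by (rule up_mono) (rule up_ge)
  show "up \<Omega> (up \<Omega> u) x \<le> up \<Omega> u x" unfolding up_def[of \<Omega> u x]
  proof (rule INF_greatest)
    fix \<delta> :: real assume "\<delta> \<in> {0<..}"
    hence d: "\<delta> > 0" by simp
    have "up \<Omega> (up \<Omega> u) x \<le> (SUP y\<in>Bd \<Omega> (\<delta>/2) x. up \<Omega> u y)"
      unfolding up_def[of \<Omega> "up \<Omega> u"] using d by (intro INF_lower) auto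
    also have "\<dots> \<le> (SUP y\<in>Bd \<Omega> \<delta> x. u y)"
    proof (rule SUP_least)
      fix y assume y: "y \<in> Bd \<Omega> (\<delta>/2) x"
      have "up \<Omega> u y \<le> (SUP z\<in>Bd \<Omega> (\<delta>/2) y. u z)"
        unfolding up_def using d by (intro INF_lower) auto
      also have "\<dots> \<le> (SUP y\<in>Bd \<Omega> \<delta> x. u y)"
        by (rule SUP_subset_mono[OF Bd_half[OF y]]) auto
      finally show "up \<Omega> u y \<le> (SUP y\<in>Bd \<Omega> \<delta> x. u y)" .
    qed
    finally show "up \<Omega> (up \<Omega> u) x \<le> (SUP y\<in>Bd \<Omega> \<delta> x. u y)" .
  qed
qed

lemma Inf_imem:
  assumes "\<And>y. y \<in> B \<Longrightarrow> fst (f y) \<le> snd (f y)"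
  shows "Inf {z. \<exists>y\<in>B. imem z (f y)} = (INF y\<in>B. fst (f y))"
proof (rule antisym)
  show "Inf {z. \<exists>y\<in>B. imem z (f y)} \<le> (INF y\<in>B. fst (f y))"
    by (rule INF_greatest, rule Inf_lower) (use assms in \<open>auto simp: imem_def\<close>)
  show "(INF y\<in>B. fst (f y)) \<le> Inf {z. \<exists>y\<in>B. imem z (f y)}"
    by (rule Inf_greatest) (auto simp: imem_def intro: INF_lower2)
qed

lemma Sup_imem:
  assumes "\<And>y. y \<in> B \<Longrightarrow> fst (f y) \<le> snd (f y)"
  shows "Sup {z. \<exists>y\<in>B. imem z (f y)} = (SUP y\<in>B. snd (f y))"
proof (rule antisym)
  show "(SUP y\<in>B. snd (f y)) \<le> Sup {z. \<exists>y\<in>B. imem z (f y)}"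
    by (rule SUP_least, rule Sup_upper) (use assms in \<open>auto simp: imem_def\<close>)
  show "Sup {z. \<exists>y\<in>B. imem z (f y)} \<le> (SUP y\<in>B. snd (f y))"
    by (rule Sup_least) (auto simp: imem_def intro: SUP_upper2)
qed

lemma Fop_A:
  assumes "f \<in> A \<Omega>" "x \<in> \<Omega>"
  shows "Fop \<Omega> f x = (lo \<Omega> (\<lambda>y. fst (f y)) x, up \<Omega> (\<lambda>y. snd (f y)) x)"
proof -
  have h: "\<And>y. y \<in> Bd \<Omega> \<delta> x \<Longrightarrow> fst (f y) \<le> snd (f y)" for \<delta>
    using assms(1) unfolding A_def Bd_def by auto
  show ?thesis using assms(2)
    unfolding Fop_def Ilow_def Supp_def lo_def up_def
    by (simp add: Inf_imem[OF h] Sup_imem[OF h])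
qed

lemma Fop_in_A:
  assumes "f \<in> A \<Omega>"
  shows "Fop \<Omega> f \<in> A \<Omega>"
proof -
  have "lo \<Omega> (\<lambda>y. fst (f y)) x \<le> up \<Omega> (\<lambda>y. snd (f y)) x" if x: "x \<in> \<Omega>" for x
  proof -
    have "lo \<Omega> (\<lambda>y. fst (f y)) x \<le> fst (f x)" by (rule lo_le[OF x])
    also have "\<dots> \<le> snd (f x)" using assms x unfolding A_def by auto
    also have "\<dots> \<le> up \<Omega> (\<lambda>y. snd (f y)) x" by (rule up_ge[OF x])
    finally show ?thesis .
  qed
  then show ?thesis using Fop_A[OF assms] unfolding A_def by (auto simp: Fop_def)
qed

lemma pt_A: "pt \<Omega> v \<in> A \<Omega>"
  unfolding pt_def A_def by auto

lemma Hcont_D: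
  assumes "f \<in> Hcont \<Omega>" "g \<in> A \<Omega>"
    "\<And>x. x \<in> \<Omega> \<Longrightarrow> fst (f x) \<le> fst (g x) \<and> snd (g x) \<le> snd (f x)" "x \<in> \<Omega>"
  shows "lo \<Omega> (\<lambda>y. fst (g y)) x = fst (f x) \<and> up \<Omega> (\<lambda>y. snd (g y)) x = snd (f x)"
proof -
  have "Fop \<Omega> g = f" using assms unfolding Hcont_def isubset_def by auto
  then have "Fop \<Omega> g x = f x" by simp
  then show ?thesis using Fop_A[OF assms(2) assms(4)] by (metis fst_conv snd_conv)
qed

lemma Hcont_props:
  assumes "f \<in> Hcont \<Omega>" "x \<in> \<Omega>"
  shows "lo \<Omega> (\<lambda>y. fst (f y)) x = fst (f x)" "up \<Omega> (\<lambda>y. fst (f y)) x = snd (f x)"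
    "lo \<Omega> (\<lambda>y. snd (f y)) x = fst (f x)" "up \<Omega> (\<lambda>y. snd (f y)) x = snd (f x)"
proof -
  have fA: "f \<in> A \<Omega>" using assms unfolding Hcont_def by auto
  have le: "\<And>y. y \<in> \<Omega> \<Longrightarrow> fst (f y) \<le> snd (f y)" using fA unfolding A_def by auto
  have c1: "\<And>y. y \<in> \<Omega> \<Longrightarrow> fst (pt \<Omega> (\<lambda>y. fst (f y)) y) = fst (f y)"
    "\<And>y. y \<in> \<Omega> \<Longrightarrow> snd (pt \<Omega> (\<lambda>y. fst (f y)) y) = fst (f y)"
    "\<And>y. y \<in> \<Omega> \<Longrightarrow> fst (pt \<Omega> (\<lambda>y. snd (f y)) y) = snd (f y)"
    "\<And>y. y \<in> \<Omega> \<Longrightarrow> snd (pt \<Omega> (\<lambda>y. snd (f y)) y) = snd (f y)"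
    unfolding pt_def by auto
  have A1: "lo \<Omega> (\<lambda>y. fst (pt \<Omega> (\<lambda>y. fst (f y)) y)) x = fst (f x) \<and>
            up \<Omega> (\<lambda>y. snd (pt \<Omega> (\<lambda>y. fst (f y)) y)) x = snd (f x)"
    by (rule Hcont_D[OF assms(1) pt_A _ assms(2)]) (auto simp: c1 le)
  have A2: "lo \<Omega> (\<lambda>y. fst (pt \<Omega> (\<lambda>y. snd (f y)) y)) x = fst (f x) \<and>
            up \<Omega> (\<lambda>y. snd (pt \<Omega> (\<lambda>y. snd (f y)) y)) x = snd (f x)"
    by (rule Hcont_D[OF assms(1) pt_A _ assms(2)]) (auto simp: c1 le)
  have e1: "lo \<Omega> (\<lambda>y. fst (pt \<Omega> (\<lambda>y. fst (f y)) y)) x = lo \<Omega> (\<lambda>y. fst (f y)) x"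
    by (rule lo_cong) (simp add: c1)
  have e2: "up \<Omega> (\<lambda>y. snd (pt \<Omega> (\<lambda>y. fst (f y)) y)) x = up \<Omega> (\<lambda>y. fst (f y)) x"
    by (rule up_cong) (simp add: c1)
  have e3: "lo \<Omega> (\<lambda>y. fst (pt \<Omega> (\<lambda>y. snd (f y)) y)) x = lo \<Omega> (\<lambda>y. snd (f y)) x"
    by (rule lo_cong) (simp add: c1)
  have e4: "up \<Omega> (\<lambda>y. snd (pt \<Omega> (\<lambda>y. snd (f y)) y)) x = up \<Omega> (\<lambda>y. snd (f y)) x"
    by (rule up_cong) (simp add: c1)
  show "lo \<Omega> (\<lambda>y. fst (f y)) x = fst (f x)" "up \<Omega> (\<lambda>y. fst (f y)) x = snd (f x)"
    "lo \<Omega> (\<lambda>y. snd (f y)) x = fst (f x)" "up \<Omega> (\<lambda>y. snd (f y)) x = snd (f x)"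
    using A1 A2 e1 e2 e3 e4 by auto
qed

lemma Hcont_I:
  assumes "h \<in> A \<Omega>"
    and "\<And>g x. g \<in> A \<Omega> \<Longrightarrow> (\<forall>x\<in>\<Omega>. fst (h x) \<le> fst (g x) \<and> snd (g x) \<le> snd (h x))
       \<Longrightarrow> x \<in> \<Omega> \<Longrightarrow> lo \<Omega> (\<lambda>y. fst (g y)) x = fst (h x) \<and> up \<Omega> (\<lambda>y. snd (g y)) x = snd (h x)"
  shows "h \<in> Hcont \<Omega>"
  unfolding Hcont_def isubset_def
proof (intro CollectI conjI ballI impI assms(1))
  fix g assume g: "g \<in> A \<Omega>" and sub: "\<forall>x\<in>\<Omega>. fst (h x) \<le> fst (g x) \<and> snd (g x) \<le> snd (h x)"
  show "Fop \<Omega> g = h"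
  proof
    fix x show "Fop \<Omega> g x = h x"
    proof (cases "x \<in> \<Omega>")
      case True
      then show ?thesis using Fop_A[OF g True] assms(2)[OF g sub True] by (simp add: prod_eq_iff)
    next
      case False
      then show ?thesis using assms(1) unfolding Fop_def A_def by auto
    qed
  qed
qed

lemma inf_part:
  fixes \<Omega> :: "'a::metric_space set" and \<F> :: "'a ifun set"
  assumes FH: "\<F> \<subseteq> Hcont \<Omega>"
    and phi: "\<And>x. x \<in> \<Omega> \<Longrightarrow> \<phi> x = Inf {z. \<exists>f\<in>\<F>. imem z (f x)}"
  shows "is_inf_H \<Omega> \<F> (Fop \<Omega> (pt \<Omega> (Ilow \<Omega> (pt \<Omega> \<phi>))))"
proof -
  define a where "a = lo \<Omega> \<phi>"
  have fA: "f \<in> A \<Omega>" if "f \<in> \<F>" for f using FH that unfolding Hcont_def by auto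
  have phi_le: "\<phi> x \<le> fst (f x)" if "x \<in> \<Omega>" "f \<in> \<F>" for x f
    unfolding phi[OF that(1)] using fA[OF that(2)] that unfolding A_def
    by (intro Inf_lower) (auto simp: imem_def)
  have phi_ge: "c \<le> \<phi> x" if "x \<in> \<Omega>" "\<And>f. f \<in> \<F> \<Longrightarrow> c \<le> fst (f x)" for x c
    unfolding phi[OF that(1)] using that(2)
    by (intro Inf_greatest) (auto simp: imem_def intro: order_trans)
  have Ilow_eq: "Ilow \<Omega> (pt \<Omega> \<phi>) x = a x" for x
  proof -
    have e: "Inf {z. \<exists>y\<in>Bd \<Omega> \<delta> x. imem z (pt \<Omega> \<phi> y)}
          = (INF y\<in>Bd \<Omega> \<delta> x. fst (pt \<Omega> \<phi> y))" for \<delta>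
      by (rule Inf_imem) (auto simp: pt_def)
    show ?thesis unfolding Ilow_def a_def lo_def e
      by (intro SUP_cong INF_cong) (auto simp: pt_def Bd_def)
  qed
  define h where "h = Fop \<Omega> (pt \<Omega> a)"
  have hdef: "Fop \<Omega> (pt \<Omega> (Ilow \<Omega> (pt \<Omega> \<phi>))) = h"
    unfolding h_def using Ilow_eq by presburger
  have hx: "h x = (a x, up \<Omega> a x)" if x: "x \<in> \<Omega>" for x
  proof -
    have "lo \<Omega> (\<lambda>y. fst (pt \<Omega> a y)) x = lo \<Omega> a x" by (rule lo_cong) (simp add: pt_def)
    moreover have "up \<Omega> (\<lambda>y. snd (pt \<Omega> a y)) x = up \<Omega> a x" by (rule up_cong) (simp add: pt_def)
    moreover have "lo \<Omega> a x = a x" unfolding a_def by (rule lo_idem[OF x])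
    ultimately show ?thesis unfolding h_def Fop_A[OF pt_A x] by simp
  qed
  have K1: "a x \<le> fst (f x)" if "x \<in> \<Omega>" "f \<in> \<F>" for x f
    unfolding a_def using lo_le[OF that(1)] phi_le[OF that] by (rule order_trans)
  have K2: "up \<Omega> a x \<le> snd (f x)" if "x \<in> \<Omega>" "f \<in> \<F>" for x f
  proof -
    have "up \<Omega> a x \<le> up \<Omega> (\<lambda>y. fst (f y)) x" by (rule up_mono) (rule K1[OF _ that(2)])
    also have "\<dots> = snd (f x)" using Hcont_props[OF _ that(1)] FH that(2) by auto
    finally show ?thesis .
  qed
  have K3: "lo \<Omega> (up \<Omega> a) x \<le> a x" if x: "x \<in> \<Omega>" for x
  proof -
    have "lo \<Omega> (up \<Omega> a) y \<le> \<phi> y" if y: "y \<in> \<Omega>" for y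
    proof (rule phi_ge[OF y])
      fix f assume f: "f \<in> \<F>"
      have "lo \<Omega> (up \<Omega> a) y \<le> lo \<Omega> (\<lambda>y. snd (f y)) y" by (rule lo_mono) (rule K2[OF _ f])
      also have "\<dots> = fst (f y)" using Hcont_props[OF _ y] FH f by auto
      finally show "lo \<Omega> (up \<Omega> a) y \<le> fst (f y)" .
    qed
    then have "lo \<Omega> (lo \<Omega> (up \<Omega> a)) x \<le> lo \<Omega> \<phi> x" by (rule lo_mono)
    then show ?thesis using lo_idem[OF x] unfolding a_def by simp
  qed
  have hA: "h \<in> Hcont \<Omega>"
  proof (rule Hcont_I)
    show "h \<in> A \<Omega>" unfolding h_def by (rule Fop_in_A[OF pt_A])
    fix g x assume g: "g \<in> A \<Omega>"
      and sub: "\<forall>x\<in>\<Omega>. fst (h x) \<le> fst (g x) \<and> snd (g x) \<le> snd (h x)" and x: "x \<in> \<Omega>"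
    have s1: "a y \<le> fst (g y)" and s2: "snd (g y) \<le> up \<Omega> a y" and s3: "fst (g y) \<le> snd (g y)"
      if "y \<in> \<Omega>" for y using sub hx g that unfolding A_def by auto
    have "lo \<Omega> a x \<le> lo \<Omega> (\<lambda>y. fst (g y)) x" by (rule lo_mono) (rule s1)
    moreover have "lo \<Omega> (\<lambda>y. fst (g y)) x \<le> lo \<Omega> (\<lambda>y. snd (g y)) x" by (rule lo_mono) (rule s3)
    moreover have "lo \<Omega> (\<lambda>y. snd (g y)) x \<le> lo \<Omega> (up \<Omega> a) x" by (rule lo_mono) (rule s2)
    moreover have "up \<Omega> (\<lambda>y. snd (g y)) x \<le> up \<Omega> (up \<Omega> a) x" by (rule up_mono) (rule s2)
    moreover have "up \<Omega> (\<lambda>y. fst (g y)) x \<le> up \<Omega> (\<lambda>y. snd (g y)) x" by (rule up_mono) (rule s3)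
    moreover have "up \<Omega> a x \<le> up \<Omega> (\<lambda>y. fst (g y)) x" by (rule up_mono) (rule s1)
    ultimately show "lo \<Omega> (\<lambda>y. fst (g y)) x = fst (h x) \<and> up \<Omega> (\<lambda>y. snd (g y)) x = snd (h x)"
      using K3[OF x] hx[OF x] up_idem[OF x, of a] lo_idem[OF x, of \<phi>] unfolding a_def
      by (auto intro: antisym order_trans)
  qed
  have lower: "ile \<Omega> h f" if "f \<in> \<F>" for f
    unfolding ile_def using hx K1 K2 that by auto
  have greatest: "ile \<Omega> g h" if g: "g \<in> Hcont \<Omega>" and lb: "\<forall>f\<in>\<F>. ile \<Omega> g f" for g
    unfolding ile_def
  proof
    fix x assume x: "x \<in> \<Omega>"
    have gp: "fst (g y) \<le> \<phi> y" if "y \<in> \<Omega>" for y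
      using lb that by (intro phi_ge) (auto simp: ile_def)
    have ga: "fst (g y) \<le> a y" if y: "y \<in> \<Omega>" for y
    proof -
      have "fst (g y) = lo \<Omega> (\<lambda>y. fst (g y)) y" using Hcont_props[OF g y] by simp
      also have "\<dots> \<le> a y" unfolding a_def by (rule lo_mono) (rule gp)
      finally show ?thesis .
    qed
    have 1: "fst (g x) \<le> a x" by (rule ga[OF x])
    have "snd (g x) = up \<Omega> (\<lambda>y. fst (g y)) x" using Hcont_props[OF g x] by simp
    also have "\<dots> \<le> up \<Omega> a x" by (rule up_mono) (rule ga)
    finally have 2: "snd (g x) \<le> up \<Omega> a x" .
    show "fst (g x) \<le> fst (h x) \<and> snd (g x) \<le> snd (h x)" using 1 2 hx[OF x] by simp
  qed
  show ?thesis unfolding hdef is_inf_H_def using hA lower greatest by blast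
qed

lemma sup_part:
  fixes \<Omega> :: "'a::metric_space set" and \<F> :: "'a ifun set"
  assumes FH: "\<F> \<subseteq> Hcont \<Omega>"
    and psi: "\<And>x. x \<in> \<Omega> \<Longrightarrow> \<psi> x = Sup {z. \<exists>f\<in>\<F>. imem z (f x)}"
  shows "is_sup_H \<Omega> \<F> (Fop \<Omega> (pt \<Omega> (Supp \<Omega> (pt \<Omega> \<psi>))))"
proof -
  define b where "b = up \<Omega> \<psi>"
  have fA: "f \<in> A \<Omega>" if "f \<in> \<F>" for f using FH that unfolding Hcont_def by auto
  have psi_ge: "snd (f x) \<le> \<psi> x" if "x \<in> \<Omega>" "f \<in> \<F>" for x f
    unfolding psi[OF that(1)] using fA[OF that(2)] that unfolding A_def
    by (intro Sup_upper) (auto simp: imem_def)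
  have psi_le: "\<psi> x \<le> c" if "x \<in> \<Omega>" "\<And>f. f \<in> \<F> \<Longrightarrow> snd (f x) \<le> c" for x c
    unfolding psi[OF that(1)] using that(2)
    by (intro Sup_least) (auto simp: imem_def intro: order_trans)
  have Supp_eq: "Supp \<Omega> (pt \<Omega> \<psi>) x = b x" for x
  proof -
    have e: "Sup {z. \<exists>y\<in>Bd \<Omega> \<delta> x. imem z (pt \<Omega> \<psi> y)}
          = (SUP y\<in>Bd \<Omega> \<delta> x. snd (pt \<Omega> \<psi> y))" for \<delta>
      by (rule Sup_imem) (auto simp: pt_def)
    show ?thesis unfolding Supp_def b_def up_def e
      by (intro SUP_cong INF_cong) (auto simp: pt_def Bd_def)
  qed
  define h where "h = Fop \<Omega> (pt \<Omega> b)"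
  have hdef: "Fop \<Omega> (pt \<Omega> (Supp \<Omega> (pt \<Omega> \<psi>))) = h"
    unfolding h_def using Supp_eq by presburger
  have hx: "h x = (lo \<Omega> b x, b x)" if x: "x \<in> \<Omega>" for x
  proof -
    have "lo \<Omega> (\<lambda>y. fst (pt \<Omega> b y)) x = lo \<Omega> b x" by (rule lo_cong) (simp add: pt_def)
    moreover have "up \<Omega> (\<lambda>y. snd (pt \<Omega> b y)) x = up \<Omega> b x" by (rule up_cong) (simp add: pt_def)
    moreover have "up \<Omega> b x = b x" unfolding b_def by (rule up_idem[OF x])
    ultimately show ?thesis unfolding h_def Fop_A[OF pt_A x] by simp
  qed
  have K1: "snd (f x) \<le> b x" if "x \<in> \<Omega>" "f \<in> \<F>" for x f
    unfolding b_def using psi_ge[OF that] up_ge[OF that(1)] by (rule order_trans)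
  have K2: "fst (f x) \<le> lo \<Omega> b x" if "x \<in> \<Omega>" "f \<in> \<F>" for x f
  proof -
    have "fst (f x) = lo \<Omega> (\<lambda>y. snd (f y)) x" using Hcont_props[OF _ that(1)] FH that(2) by auto
    also have "\<dots> \<le> lo \<Omega> b x" by (rule lo_mono) (rule K1[OF _ that(2)])
    finally show ?thesis .
  qed
  have K3: "b x \<le> up \<Omega> (lo \<Omega> b) x" if x: "x \<in> \<Omega>" for x
  proof -
    have "\<psi> y \<le> up \<Omega> (lo \<Omega> b) y" if y: "y \<in> \<Omega>" for y
    proof (rule psi_le[OF y])
      fix f assume f: "f \<in> \<F>"
      have "snd (f y) = up \<Omega> (\<lambda>y. fst (f y)) y" using Hcont_props[OF _ y] FH f by auto
      also have "\<dots> \<le> up \<Omega> (lo \<Omega> b) y" by (rule up_mono) (rule K2[OF _ f])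
      finally show "snd (f y) \<le> up \<Omega> (lo \<Omega> b) y" .
    qed
    then have "up \<Omega> \<psi> x \<le> up \<Omega> (up \<Omega> (lo \<Omega> b)) x" by (rule up_mono)
    then show ?thesis using up_idem[OF x] unfolding b_def by simp
  qed
  have hA: "h \<in> Hcont \<Omega>"
  proof (rule Hcont_I)
    show "h \<in> A \<Omega>" unfolding h_def by (rule Fop_in_A[OF pt_A])
    fix g x assume g: "g \<in> A \<Omega>"
      and sub: "\<forall>x\<in>\<Omega>. fst (h x) \<le> fst (g x) \<and> snd (g x) \<le> snd (h x)" and x: "x \<in> \<Omega>"
    have s1: "lo \<Omega> b y \<le> fst (g y)" and s2: "snd (g y) \<le> b y" and s3: "fst (g y) \<le> snd (g y)"
      if "y \<in> \<Omega>" for y using sub hx g that unfolding A_def by auto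
    have "lo \<Omega> (lo \<Omega> b) x \<le> lo \<Omega> (\<lambda>y. fst (g y)) x" by (rule lo_mono) (rule s1)
    moreover have "lo \<Omega> (\<lambda>y. fst (g y)) x \<le> lo \<Omega> (\<lambda>y. snd (g y)) x" by (rule lo_mono) (rule s3)
    moreover have "lo \<Omega> (\<lambda>y. snd (g y)) x \<le> lo \<Omega> b x" by (rule lo_mono) (rule s2)
    moreover have "up \<Omega> (\<lambda>y. snd (g y)) x \<le> up \<Omega> b x" by (rule up_mono) (rule s2)
    moreover have "up \<Omega> (\<lambda>y. fst (g y)) x \<le> up \<Omega> (\<lambda>y. snd (g y)) x" by (rule up_mono) (rule s3)
    moreover have "up \<Omega> (lo \<Omega> b) x \<le> up \<Omega> (\<lambda>y. fst (g y)) x" by (rule up_mono) (rule s1)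
    ultimately show "lo \<Omega> (\<lambda>y. fst (g y)) x = fst (h x) \<and> up \<Omega> (\<lambda>y. snd (g y)) x = snd (h x)"
      using K3[OF x] hx[OF x] lo_idem[OF x, of b] up_idem[OF x, of \<psi>] unfolding b_def
      by (auto intro: antisym order_trans)
  qed
  have upper: "ile \<Omega> f h" if "f \<in> \<F>" for f
    unfolding ile_def using hx K1 K2 that by auto
  have least: "ile \<Omega> h g" if g: "g \<in> Hcont \<Omega>" and ub: "\<forall>f\<in>\<F>. ile \<Omega> f g" for g
    unfolding ile_def
  proof
    fix x assume x: "x \<in> \<Omega>"
    have gp: "\<psi> y \<le> snd (g y)" if "y \<in> \<Omega>" for y
      using ub that by (intro psi_le) (auto simp: ile_def)
    have gb: "b y \<le> snd (g y)" if y: "y \<in> \<Omega>" for y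
    proof -
      have "b y \<le> up \<Omega> (\<lambda>y. snd (g y)) y" unfolding b_def by (rule up_mono) (rule gp)
      also have "\<dots> = snd (g y)" using Hcont_props[OF g y] by simp
      finally show ?thesis .
    qed
    have 2: "b x \<le> snd (g x)" by (rule gb[OF x])
    have "lo \<Omega> b x \<le> lo \<Omega> (\<lambda>y. snd (g y)) x" by (rule lo_mono) (rule gb)
    also have "\<dots> = fst (g x)" using Hcont_props[OF g x] by simp
    finally have 1: "lo \<Omega> b x \<le> fst (g x)" .
    show "fst (h x) \<le> fst (g x) \<and> snd (h x) \<le> snd (g x)" using 1 2 hx[OF x] by simp
  qed
  show ?thesis unfolding hdef is_sup_H_def using hA upper least by blast
qed

theorem theorem9:
  fixes \<Omega> :: "(real ^ 'n) set" and \<F> :: "(real ^ 'n) ifun set"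
    and \<phi> \<psi> :: "real ^ 'n \<Rightarrow> ereal"
  assumes "open \<Omega>"
    and "\<F> \<subseteq> Hcont \<Omega>"
    and "\<And>x. x \<in> \<Omega> \<Longrightarrow> \<phi> x = Inf {z. \<exists>f\<in>\<F>. imem z (f x)}"
    and "\<And>x. x \<in> \<Omega> \<Longrightarrow> \<psi> x = Sup {z. \<exists>f\<in>\<F>. imem z (f x)}"
  shows "is_inf_H \<Omega> \<F> (Fop \<Omega> (pt \<Omega> (Ilow \<Omega> (pt \<Omega> \<phi>))))
       \<and> is_sup_H \<Omega> \<F> (Fop \<Omega> (pt \<Omega> (Supp \<Omega> (pt \<Omega> \<psi>))))"
  using inf_part[OF assms(2) assms(3)] sup_part[OF assms(2) assms(4)] by blast

end
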